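(* Let $n\geq 2$ and let $L=(a,b,c)$ be an arbitrary sequence of three positive integers such that $UD_n(L)\neq\emptyset$. Then $\rho_{n,L}>\alpha_n$, where $\alpha_2=1/6$ and $\alpha_n=(n-2)/n$ for $n>2$.
   Context: Let $X$ be a finite alphabet with $n\geq 2$ letters and $X^*$ the set of words over $X$; $|v|$ is the length of a word $v$. A code over $X$ is a finite sequence $C=(v_1,\ldots,v_m)$ of words over $X$ such that every $w\in X^*$ has at most one factorization into code-words: if $w=v_{i_1}\cdots v_{i_l}=v_{j_1}\cdots v_{j_{l'}}$ with $l,l'\geq1$, then $l=l'$ and $i_t=j_t$ for all $t$. (Codes are sequences, not sets.) A code $C=(v_1,\ldots,v_m)$ is a prefix code if for all $i,j$, $v_i$ is a prefix of $v_j$ if and only if $i=j$. For a finite sequence $L=(a_1,\ldots,a_m)$ of positive integers, $UD_n(L)$ is the set of all codes $(v_1,\ldots,v_m)$ over an $n$-letter alphabet with $|v_i|=a_i$ for all $i$, $PR_n(L)\subseteq UD_n(L)$ is the subset of prefix codes, and $\rho_{n,L}=|PR_n(L)|/|UD_n(L)|$ (defined when $UD_n(L)\ne\emptyset$). *)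

theory Defs
  imports Complex_Main "HOL-Library.Sublist"
begin

definition is_code :: "nat list list \<Rightarrow> bool" where
  "is_code C \<longleftrightarrow>
     (\<forall>is js. is \<noteq> [] \<longrightarrow> js \<noteq> [] \<longrightarrow>
        set is \<subseteq> {..<length C} \<longrightarrow> set js \<subseteq> {..<length C} \<longrightarrow>
        concat (map (\<lambda>i. C ! i) is) = concat (map (\<lambda>j. C ! j) js) \<longrightarrow> is = js)"

definition is_prefix_code :: "nat list list \<Rightarrow> bool" where
  "is_prefix_code C \<longleftrightarrow>
     (\<forall>i<length C. \<forall>j<length C. prefix (C ! i) (C ! j) \<longleftrightarrow> i = j)"

definition UD :: "nat \<Rightarrow> nat list \<Rightarrow> nat list list set" where
  "UD n L = {C. length C = length L
               \<and> (\<forall>i<length L. length (C ! i) = L ! i \<and> set (C ! i) \<subseteq> {..<n})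
               \<and> is_code C}"

definition PR :: "nat \<Rightarrow> nat list \<Rightarrow> nat list list set" where
  "PR n L = {C \<in> UD n L. is_prefix_code C}"

definition rho :: "nat \<Rightarrow> nat list \<Rightarrow> real" where
  "rho n L = real (card (PR n L)) / real (card (UD n L))"

definition alpha :: "nat \<Rightarrow> real" where
  "alpha n = (if n = 2 then 1/6 else (real n - 2) / real n)"

end

theory Submission
  imports Defs
begin

definition W :: "nat \<Rightarrow> nat \<Rightarrow> nat list set" where
  "W n k = {w. set w \<subseteq> {..<n} \<and> length w = k}"

lemma finite_W[simp]: "finite (W n k)"
  unfolding W_def by (rule finite_lists_length_eq) simp

lemma card_W: "card (W n k) = n ^ k"
  unfolding W_def using card_lists_length_eq[of "{..<n}" k] by simp

lemma prefix_eq_len: "prefix v u \<Longrightarrow> length u \<le> length v \<Longrightarrow> u = v"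
  by (metis append_Nil2 append_eq_conv_conj le_antisym prefix_def prefix_length_le take_all)

lemma card_ext:
  assumes "u \<in> W n k" "k \<le> c"
  shows "card {z \<in> W n c. prefix u z} = n ^ (c - k)"
proof -
  have "{z \<in> W n c. prefix u z} = (\<lambda>t. u @ t) ` W n (c - k)"
    using assms by (auto simp: W_def prefix_def image_iff)
  moreover have "inj_on (\<lambda>t. u @ t) (W n (c - k))" by (auto intro: inj_onI)
  ultimately show ?thesis by (simp add: card_image card_W)
qed

lemma card_avoid1:
  assumes "u \<in> W n k" "k \<le> c"
  shows "real (card {z \<in> W n c. \<not> prefix u z}) = real n ^ c - real n ^ (c - k)"
proof -
  have e: "{z \<in> W n c. \<not> prefix u z} = W n c - {z \<in> W n c. prefix u z}" by auto
  have "card {z \<in> W n c. \<not> prefix u z} = card (W n c) - card {z \<in> W n c. prefix u z}"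
    unfolding e by (rule card_Diff_subset) auto
  moreover have "card {z \<in> W n c. prefix u z} \<le> card (W n c)" by (rule card_mono) auto
  ultimately show ?thesis using card_ext[OF assms] by (simp add: card_W of_nat_diff)
qed

lemma card_avoid2:
  assumes "u \<in> W n k" "v \<in> W n m" "k \<le> m" "m \<le> c" "\<not> prefix u v"
  shows "real (card {z \<in> W n c. \<not> prefix u z \<and> \<not> prefix v z})
         = real n ^ c - real n ^ (c - k) - real n ^ (c - m)"
proof -
  let ?E = "\<lambda>w. {z \<in> W n c. prefix w z}"
  have e: "{z \<in> W n c. \<not> prefix u z \<and> \<not> prefix v z} = W n c - (?E u \<union> ?E v)" by auto
  have disj: "?E u \<inter> ?E v = {}"
  proof (rule ccontr)
    assume "?E u \<inter> ?E v \<noteq> {}"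
    then obtain z where "prefix u z" "prefix v z" by auto
    then have "prefix u v \<or> prefix v u" by (rule prefix_same_cases)
    moreover have "prefix v u \<Longrightarrow> u = v"
      using assms by (intro prefix_eq_len) (auto simp: W_def)
    ultimately show False using assms(5) by auto
  qed
  have cu: "card (?E u \<union> ?E v) = n ^ (c - k) + n ^ (c - m)"
    using card_Un_disjoint[OF _ _ disj] card_ext[OF assms(1)] card_ext[OF assms(2)] assms by simp
  have "card (W n c - (?E u \<union> ?E v)) = card (W n c) - card (?E u \<union> ?E v)"
    by (rule card_Diff_subset) auto
  moreover have "card (?E u \<union> ?E v) \<le> card (W n c)" by (rule card_mono) auto
  ultimately show ?thesis unfolding e using cu by (simp add: card_W of_nat_diff)
qed

lemma prefix_free_concat:
  assumes ne: "\<forall>i<length C. C ! i \<noteq> []"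
    and pf: "\<forall>i<length C. \<forall>j<length C. prefix (C ! i) (C ! j) \<longrightarrow> i = j"
  shows "set is \<subseteq> {..<length C} \<Longrightarrow> set js \<subseteq> {..<length C} \<Longrightarrow>
         concat (map (\<lambda>i. C ! i) is) = concat (map (\<lambda>i. C ! i) js) \<Longrightarrow> is = js"
proof (induction "is" arbitrary: js)
  case Nil
  then show ?case using ne by (cases js) auto
next
  case (Cons i is')
  show ?case
  proof (cases js)
    case Nil
    then show ?thesis using Cons ne by auto
  next
    case (Cons j js')
    with Cons.prems have eq: "C ! i @ concat (map (\<lambda>i. C ! i) is') = C ! j @ concat (map (\<lambda>i. C ! i) js')"
      and ij: "i < length C" "j < length C" by auto
    have "prefix (C ! i) (C ! j) \<or> prefix (C ! j) (C ! i)"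
      using eq by (metis prefix_same_cases prefixI)
    then have "i = j" using pf ij by auto
    with eq have "concat (map (\<lambda>i. C ! i) is') = concat (map (\<lambda>i. C ! i) js')" by simp
    then have "is' = js'" using Cons.IH Cons.prems \<open>js = j # js'\<close> by auto
    then show ?thesis using \<open>i = j\<close> \<open>js = j # js'\<close> by simp
  qed
qed

lemma noncode:
  assumes "is_code C" "i < length C" "set js \<subseteq> {..<length C}" "js \<noteq> []"
    "C ! i = concat (map (\<lambda>j. C ! j) js)"
  shows "js = [i]"
proof -
  have "\<forall>is js. is \<noteq> [] \<longrightarrow> js \<noteq> [] \<longrightarrow>
        set is \<subseteq> {..<length C} \<longrightarrow> set js \<subseteq> {..<length C} \<longrightarrow>
        concat (map (\<lambda>i. C ! i) is) = concat (map (\<lambda>j. C ! j) js) \<longrightarrow> is = js"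
    using assms(1) unfolding is_code_def .
  then have "[i] = js" using assms(2-5) by simp
  then show ?thesis by simp
qed

lemma card_Sigma3:
  assumes "finite A" "\<And>x. x\<in>A \<Longrightarrow> finite (B x)"
    "\<And>x y. x\<in>A \<Longrightarrow> y \<in> B x \<Longrightarrow> finite (Cf x y)"
    "\<And>x. x\<in>A \<Longrightarrow> real (card (B x)) = K2"
    "\<And>x y. x\<in>A \<Longrightarrow> y\<in>B x \<Longrightarrow> real (card (Cf x y)) = K3"
  shows "real (card (SIGMA x:A. SIGMA y:B x. Cf x y)) = real (card A) * K2 * K3"
proof -
  have "card (SIGMA x:A. SIGMA y:B x. Cf x y) = (\<Sum>x\<in>A. card (SIGMA y:B x. Cf x y))"
    using assms(1-3) by (intro card_SigmaI) (auto intro!: finite_SigmaI)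
  also have "\<dots> = (\<Sum>x\<in>A. \<Sum>y\<in>B x. card (Cf x y))"
    using assms(2,3) by (intro sum.cong refl card_SigmaI) auto
  finally have "real (card (SIGMA x:A. SIGMA y:B x. Cf x y)) = (\<Sum>x\<in>A. \<Sum>y\<in>B x. real (card (Cf x y)))"
    by simp
  also have "\<dots> = (\<Sum>x\<in>A. \<Sum>y\<in>B x. K3)"
    using assms(5) by (intro sum.cong refl) auto
  also have "\<dots> = (\<Sum>x\<in>A. K2 * K3)"
    using assms(4) by (intro sum.cong refl) auto
  also have "\<dots> = real (card A) * K2 * K3" by simp
  finally show ?thesis .
qed

lemma all3: "(\<forall>i<(3::nat). P i) \<longleftrightarrow> P 0 \<and> P 1 \<and> P 2"
  by (auto simp: numeral_3_eq_3 numeral_2_eq_2 less_Suc_eq)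

lemma len3: "length [a,b,c::'a] = 3" by simp

lemma test: "[x,y,z] \<in> UD n [a,b,c] \<longleftrightarrow> x \<in> W n a \<and> y \<in> W n b \<and> z \<in> W n c \<and> is_code [x,y,z]"
  unfolding UD_def W_def len3 all3 by auto

lemma UDform: "C \<in> UD n [a,b,c] \<Longrightarrow> \<exists>x y z. C = [x,y,z]"
  by (auto simp: UD_def length_Suc_conv)

lemma W1: "x \<in> W n (Suc 0) \<Longrightarrow> \<exists>p<n. x = [p]"
  by (auto simp: W_def length_Suc_conv)

lemma rep_W: "x \<in> W n 1 \<Longrightarrow> concat (replicate c x) \<in> W n c"
  by (induction c) (auto simp: W_def)

lemma rep_W2: "x \<in> W n k \<Longrightarrow> concat (replicate c x) \<in> W n (c*k)"
  by (induction c) (auto simp: W_def)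

lemma rep_inj: "0 < c \<Longrightarrow> length x = length y \<Longrightarrow> concat (replicate c x) = concat (replicate c y) \<Longrightarrow> x = y"
  by (cases c) (auto simp: append_eq_append_conv)



definition permL :: "(nat \<Rightarrow> nat) \<Rightarrow> 'a list \<Rightarrow> 'a list" where
  "permL \<sigma> C = map (\<lambda>i. C ! \<sigma> i) [0..<length C]"

definition invol :: "(nat \<Rightarrow> nat) \<Rightarrow> nat \<Rightarrow> bool" where
  "invol \<sigma> m \<longleftrightarrow> (\<forall>i<m. \<sigma> i < m \<and> \<sigma> (\<sigma> i) = i)"

lemma permL_length[simp]: "length (permL \<sigma> C) = length C"
  by (simp add: permL_def)

lemma permL_nth[simp]: "i < length C \<Longrightarrow> permL \<sigma> C ! i = C ! \<sigma> i"
  by (simp add: permL_def)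

lemma permL_invol:
  assumes "invol \<sigma> (length C)" shows "permL \<sigma> (permL \<sigma> C) = C"
  using assms by (intro nth_equalityI) (auto simp: invol_def)

lemma invol_inj: "invol \<sigma> m \<Longrightarrow> inj_on \<sigma> {..<m}"
  unfolding invol_def by (metis inj_onI lessThan_iff)

lemma code_perm:
  assumes inv: "invol \<sigma> (length C)" and code: "is_code C"
  shows "is_code (permL \<sigma> C)"
  unfolding is_code_def
proof (intro allI impI)
  fix "is" js
  assume h: "is \<noteq> []" "js \<noteq> []" "set is \<subseteq> {..<length (permL \<sigma> C)}"
    "set js \<subseteq> {..<length (permL \<sigma> C)}"
    "concat (map ((!) (permL \<sigma> C)) is) = concat (map ((!) (permL \<sigma> C)) js)"
  have e: "\<And>ks. set ks \<subseteq> {..<length C} \<Longrightarrow>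
     map ((!) (permL \<sigma> C)) ks = map (\<lambda>i. C ! i) (map \<sigma> ks)"
    by (auto intro!: map_cong)
  have s: "\<And>ks. set ks \<subseteq> {..<length C} \<Longrightarrow> set (map \<sigma> ks) \<subseteq> {..<length C}"
    using inv by (auto simp: invol_def)
  have "\<forall>is js. is \<noteq> [] \<longrightarrow> js \<noteq> [] \<longrightarrow>
        set is \<subseteq> {..<length C} \<longrightarrow> set js \<subseteq> {..<length C} \<longrightarrow>
        concat (map (\<lambda>i. C ! i) is) = concat (map (\<lambda>j. C ! j) js) \<longrightarrow> is = js"
    using code unfolding is_code_def .
  then have "map \<sigma> is = map \<sigma> js"
    using h e[of "is"] e[of js] s[of "is"] s[of js] by simp
  moreover have "inj_on \<sigma> (set is \<union> set js)"
    using invol_inj[OF inv] h by (auto elim: inj_on_subset)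
  ultimately show "is = js" by (rule map_inj_on)
qed

lemma UD_perm:
  assumes inv: "invol \<sigma> (length L)" and C: "C \<in> UD n L"
  shows "permL \<sigma> C \<in> UD n (permL \<sigma> L)"
proof -
  have l: "length C = length L" using C by (simp add: UD_def)
  have "is_code (permL \<sigma> C)" using code_perm[of \<sigma> C] inv C l by (simp add: UD_def)
  moreover have "\<forall>i<length L. length (C ! \<sigma> i) = L ! \<sigma> i \<and> set (C ! \<sigma> i) \<subseteq> {..<n}"
    using C inv by (auto simp: UD_def invol_def)
  ultimately show ?thesis using l by (simp add: UD_def)
qed

lemma PR_perm:
  assumes inv: "invol \<sigma> (length L)" and C: "C \<in> PR n L"
  shows "permL \<sigma> C \<in> PR n (permL \<sigma> L)"
proof -
  have U: "C \<in> UD n L" and pc: "is_prefix_code C" using C by (auto simp: PR_def)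
  have l: "length C = length L" using U by (simp add: UD_def)
  have "is_prefix_code (permL \<sigma> C)"
    using pc inv l invol_inj[OF inv] unfolding is_prefix_code_def invol_def inj_on_def
    by auto
  then show ?thesis using UD_perm[OF inv U] by (simp add: PR_def)
qed

lemma card_perm:
  assumes inv: "invol \<sigma> (length L)"
  shows "card (UD n (permL \<sigma> L)) = card (UD n L)" "card (PR n (permL \<sigma> L)) = card (PR n L)"
    "UD n (permL \<sigma> L) \<noteq> {} \<longleftrightarrow> UD n L \<noteq> {}"
proof -
  have inv2: "invol \<sigma> (length (permL \<sigma> L))" using inv by simp
  have LL: "permL \<sigma> (permL \<sigma> L) = L" using permL_invol[OF inv] .
  have lenU: "\<And>C L. C \<in> UD n L \<Longrightarrow> length C = length L" by (simp add: UD_def)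
  have lenP: "\<And>C L. C \<in> PR n L \<Longrightarrow> length C = length L" by (simp add: UD_def PR_def)
  have imU: "permL \<sigma> ` UD n L = UD n (permL \<sigma> L)"
  proof
    show "permL \<sigma> ` UD n L \<subseteq> UD n (permL \<sigma> L)" using UD_perm[OF inv] by auto
    show "UD n (permL \<sigma> L) \<subseteq> permL \<sigma> ` UD n L"
    proof
      fix D assume D: "D \<in> UD n (permL \<sigma> L)"
      then have "permL \<sigma> D \<in> UD n L" using UD_perm[OF inv2 D] LL by simp
      moreover have "D = permL \<sigma> (permL \<sigma> D)"
        using permL_invol[of \<sigma> D] lenU[OF D] inv by simp
      ultimately show "D \<in> permL \<sigma> ` UD n L" by blast
    qed
  qed
  have imP: "permL \<sigma> ` PR n L = PR n (permL \<sigma> L)"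
  proof
    show "permL \<sigma> ` PR n L \<subseteq> PR n (permL \<sigma> L)" using PR_perm[OF inv] by auto
    show "PR n (permL \<sigma> L) \<subseteq> permL \<sigma> ` PR n L"
    proof
      fix D assume D: "D \<in> PR n (permL \<sigma> L)"
      then have "permL \<sigma> D \<in> PR n L" using PR_perm[OF inv2 D] LL by simp
      moreover have "D = permL \<sigma> (permL \<sigma> D)"
        using permL_invol[of \<sigma> D] lenP[OF D] inv by simp
      ultimately show "D \<in> permL \<sigma> ` PR n L" by blast
    qed
  qed
  have injU: "inj_on (permL \<sigma>) (UD n L)"
  proof (rule inj_on_inverseI[where g = "permL \<sigma>"])
    fix x assume x: "x \<in> UD n L"
    show "permL \<sigma> (permL \<sigma> x) = x" using permL_invol[of \<sigma> x] lenU[OF x] inv by simp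
  qed
  have injP: "inj_on (permL \<sigma>) (PR n L)"
  proof (rule inj_on_inverseI[where g = "permL \<sigma>"])
    fix x assume x: "x \<in> PR n L"
    show "permL \<sigma> (permL \<sigma> x) = x" using permL_invol[of \<sigma> x] lenP[OF x] inv by simp
  qed
  show "card (UD n (permL \<sigma> L)) = card (UD n L)" using card_image[OF injU] imU by simp
  show "card (PR n (permL \<sigma> L)) = card (PR n L)" using card_image[OF injP] imP by simp
  show "UD n (permL \<sigma> L) \<noteq> {} \<longleftrightarrow> UD n L \<noteq> {}" using imU by auto
qed

definition sw01 :: "nat \<Rightarrow> nat" where "sw01 i = (if i = 0 then 1 else if i = 1 then 0 else i)"
definition sw12 :: "nat \<Rightarrow> nat" where "sw12 i = (if i = 1 then 2 else if i = 2 then 1 else i)"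

lemma sw01: "invol sw01 (length [a,b,c::'a])" "permL sw01 [a,b,c] = [b,a,c]"
  by (auto simp: invol_def sw01_def permL_def numeral_3_eq_3 less_Suc_eq upt_rec)

lemma sw12: "invol sw12 (length [a,b,c::'a])" "permL sw12 [a,b,c] = [a,c,b]"
  by (auto simp: invol_def sw12_def permL_def numeral_3_eq_3 numeral_2_eq_2 less_Suc_eq upt_rec)

definition Q :: "nat \<Rightarrow> nat list \<Rightarrow> bool" where
  "Q n L \<longleftrightarrow> (UD n L \<noteq> {} \<longrightarrow> rho n L > alpha n)"

lemma Q01: "Q n [a,b,c] \<longleftrightarrow> Q n [b,a,c]"
  using card_perm[OF sw01(1)[of a b c]] unfolding sw01(2) Q_def rho_def by simp

lemma Q12: "Q n [a,b,c] \<longleftrightarrow> Q n [a,c,b]"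
  using card_perm[OF sw12(1)[of a b c]] unfolding sw12(2) Q_def rho_def by simp


lemma ident3:
  fixes nn A D C' :: real assumes "nn > 0"
  shows "A*(A*D - D)*(A*D*C' - D*C' - C') - (nn-2)/nn*(A*(A*D)*(A*D*C'))
     = A*D*C'/nn * (D*(2*A^2 - 2*nn*A + nn) - nn*A + nn)"
  using assms by (simp add: field_simps power2_eq_square)

lemma ident2:
  fixes A D C' :: real
  shows "A*(A*D - D)*(A*D*C' - D*C' - C') - 1/6*(A*(A*D)*(A*D*C'))
     = A*D*C'/6 * (D*(5*A^2 - 12*A + 6) - 6*A + 6)"
  by (simp add: field_simps power2_eq_square)

lemma arith3:
  fixes nn A D C' :: real
  assumes "nn > 0" "A > 0" "D > 0" "C' > 0" "D*(2*A^2 - 2*nn*A + nn) - nn*A + nn > 0"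
  shows "(nn-2)/nn*(A*(A*D)*(A*D*C')) < A*(A*D - D)*(A*D*C' - D*C' - C')"
proof -
  have "A*D*C'/nn * (D*(2*A^2 - 2*nn*A + nn) - nn*A + nn) > 0"
    using assms by (intro mult_pos_pos divide_pos_pos) auto
  then show ?thesis using ident3[OF assms(1), of A D C'] by linarith
qed

lemma arith2:
  fixes A D C' :: real
  assumes "A > 0" "D > 0" "C' > 0" "D*(5*A^2 - 12*A + 6) - 6*A + 6 > 0"
  shows "1/6*(A*(A*D)*(A*D*C')) < A*(A*D - D)*(A*D*C' - D*C' - C')"
proof -
  have "A*D*C'/6 * (D*(5*A^2 - 12*A + 6) - 6*A + 6) > 0"
    using assms by (intro mult_pos_pos divide_pos_pos) auto
  then show ?thesis using ident2[of A D C'] by linarith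
qed

lemma concat_singletons: "concat (map (\<lambda>l. [l]) z) = z"
  by (induction z) auto


lemma main:
  fixes n a b c :: nat
  assumes ab: "a \<le> b" and bc: "b \<le> c" and a0: "0 < a" and n2: "2 \<le> n"
    and ne: "UD n [a,b,c] \<noteq> {}"
  shows "rho n [a,b,c] > alpha n"
proof -
  define trip :: "nat list \<times> nat list \<times> nat list \<Rightarrow> nat list list" where
    "trip = (\<lambda>(x,y,z). [x,y,z])"
  have inj_trip: "inj_on trip S" for S by (auto simp: trip_def intro!: inj_onI)
  have UD3: "\<And>x y z. [x,y,z] \<in> UD n [a,b,c] \<longleftrightarrow>
      x \<in> W n a \<and> y \<in> W n b \<and> z \<in> W n c \<and> is_code [x,y,z]" by (rule test)
  have UDsub: "UD n [a,b,c] \<subseteq> trip ` S"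
    if h: "\<And>x y z. [x,y,z] \<in> UD n [a,b,c] \<Longrightarrow> (x,y,z) \<in> S" for S
  proof
    fix C assume C: "C \<in> UD n [a,b,c]"
    obtain x y z where "C = [x,y,z]" using UDform[OF C] by blast
    then show "C \<in> trip ` S" using h C by (force simp: trip_def image_iff)
  qed
  define S0 where "S0 = W n a \<times> W n b \<times> W n c"
  have finS0: "finite S0" by (simp add: S0_def)
  have sub0: "UD n [a,b,c] \<subseteq> trip ` S0" by (rule UDsub) (auto simp: S0_def UD3)
  have finUD: "finite (UD n [a,b,c])" using finite_subset[OF sub0] finS0 by blast
  have finPR: "finite (PR n [a,b,c])" using finUD by (rule rev_finite_subset) (auto simp: PR_def)
  have UDpos: "card (UD n [a,b,c]) > 0" using finUD ne by (simp add: card_gt_0_iff)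
  have cardle: "real (card (UD n [a,b,c])) \<le> real (card S)"
    if "UD n [a,b,c] \<subseteq> trip ` S" "finite S" for S
    using card_mono[OF finite_imageI[OF that(2)] that(1)] card_image[OF inj_trip[of S]] by simp
  define SP where "SP = (SIGMA x:W n a. SIGMA y:{y \<in> W n b. \<not> prefix x y}.
     {z \<in> W n c. \<not> prefix x z \<and> \<not> prefix y z})"
  have SPsub: "trip ` SP \<subseteq> PR n [a,b,c]"
  proof
    fix C assume "C \<in> trip ` SP"
    then obtain x y z where C: "C = [x,y,z]" and h: "(x,y,z) \<in> SP" by (auto simp: trip_def)
    from h have hx: "x \<in> W n a" and hy: "y \<in> W n b" and hz: "z \<in> W n c"
      and pxy: "\<not> prefix x y" and pxz: "\<not> prefix x z" and pyz: "\<not> prefix y z"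
      by (auto simp: SP_def)
    have lx: "length x = a" "length y = b" "length z = c" using hx hy hz by (auto simp: W_def)
    have pyx: "\<not> prefix y x" using prefix_eq_len[of y x] lx ab pxy by force
    have pzx: "\<not> prefix z x" using prefix_eq_len[of z x] lx ab bc pxz by force
    have pzy: "\<not> prefix z y" using prefix_eq_len[of z y] lx bc pyz by force
    have pf: "\<forall>i<length [x,y,z]. \<forall>j<length [x,y,z]. prefix ([x,y,z]!i) ([x,y,z]!j) \<longleftrightarrow> i = j"
      unfolding len3 all3 using pxy pxz pyz pyx pzx pzy by simp
    have pf': "\<forall>i<length [x,y,z]. \<forall>j<length [x,y,z]. prefix ([x,y,z]!i) ([x,y,z]!j) \<longrightarrow> i = j"
      using pf by blast
    have nonempty: "\<forall>i<length [x,y,z]. [x,y,z] ! i \<noteq> []"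
      unfolding len3 all3 using lx a0 ab bc by auto
    have code: "is_code [x,y,z]" unfolding is_code_def
      using prefix_free_concat[OF nonempty pf'] by blast
    show "C \<in> PR n [a,b,c]" using C hx hy hz code pf
      by (simp add: PR_def UD3 is_prefix_code_def)
  qed
  define nn where "nn = real n"
  have nn2: "nn \<ge> 2" using n2 by (simp add: nn_def)
  have cardSP: "real (card SP) = nn^a * (nn^b - nn^(b-a)) * (nn^c - nn^(c-a) - nn^(c-b))"
  proof -
    have "real (card SP) = real (card (W n a)) * (nn^b - nn^(b-a)) * (nn^c - nn^(c-a) - nn^(c-b))"
      unfolding SP_def
    proof (rule card_Sigma3)
      show "\<And>x. x \<in> W n a \<Longrightarrow> real (card {y \<in> W n b. \<not> prefix x y}) = nn ^ b - nn ^ (b - a)"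
        using card_avoid1 ab by (simp add: nn_def)
      show "\<And>x y. x \<in> W n a \<Longrightarrow> y \<in> {y \<in> W n b. \<not> prefix x y} \<Longrightarrow>
         real (card {z \<in> W n c. \<not> prefix x z \<and> \<not> prefix y z}) = nn ^ c - nn ^ (c - a) - nn ^ (c - b)"
        using card_avoid2 ab bc by (simp add: nn_def)
    qed auto
    then show ?thesis by (simp add: card_W nn_def)
  qed
  have PRge: "real (card SP) \<le> real (card (PR n [a,b,c]))"
    using card_mono[OF finPR SPsub] card_image[OF inj_trip[of SP]] by simp
  have alpha0: "alpha n \<ge> 0" using n2 by (simp add: alpha_def)
  have key: "rho n [a,b,c] > alpha n"
    if U1: "real (card (UD n [a,b,c])) \<le> U" and U2: "alpha n * U < real (card SP)" for U
  proof -
    have "alpha n * real (card (UD n [a,b,c])) \<le> alpha n * U"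
      using U1 alpha0 by (rule mult_left_mono)
    then have "alpha n * real (card (UD n [a,b,c])) < real (card (PR n [a,b,c]))"
      using U2 PRge by linarith
    then show ?thesis unfolding rho_def using UDpos by (simp add: pos_less_divide_eq)
  qed
  consider (D) "n = 2" "a = 1" "b = 1" | (C) "n = 2" "a = 1" "b = 2"
    | (E) "n \<ge> 3" "a = 1" "b = 1" | (G) "\<not> (a = 1 \<and> b = 1)" "\<not> (n = 2 \<and> a = 1 \<and> b = 2)"
    using n2 by linarith
  then show ?thesis
  proof cases
    case G
    have Ule: "real (card (UD n [a,b,c])) \<le> real (card S0)" by (rule cardle[OF sub0 finS0])
    define A where "A = nn^a"
    define D where "D = nn^(b-a)"
    define C' where "C' = nn^(c-b)"
    have Apos: "A > 0" and Dpos: "D > 0" and Cpos: "C' > 0" using nn2 by (auto simp: A_def D_def C'_def)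
    have eb: "nn^b = A*D"
    proof -
      have "b = a + (b-a)" using ab by simp
      then show ?thesis unfolding A_def D_def by (metis power_add)
    qed
    have ecb: "nn^c = nn^b * C'"
    proof -
      have "c = b + (c-b)" using bc by simp
      then show ?thesis unfolding C'_def by (metis power_add)
    qed
    have eca: "nn^(c-a) = D*C'"
    proof -
      have "c - a = (b-a) + (c-b)" using ab bc by simp
      then show ?thesis unfolding C'_def D_def by (metis power_add)
    qed
    have cS0: "real (card S0) = A*(A*D)*(A*D*C')"
      by (simp add: S0_def card_cartesian_product card_W nn_def[symmetric] A_def[symmetric] eb ecb)
    have cSP: "real (card SP) = A*(A*D - D)*(A*D*C' - D*C' - C')"
      unfolding cardSP eca ecb eb A_def[symmetric] D_def[symmetric] C'_def[symmetric] by simp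
    have D1: "D \<ge> 1" using nn2 by (simp add: D_def)
    show ?thesis
    proof (rule key[OF Ule])
      show "alpha n * real (card S0) < real (card SP)"
        unfolding cS0 cSP
      proof (cases "n = 2")
        case False
        then have n3: "nn \<ge> 3" using n2 by (simp add: nn_def)
        have al: "alpha n = (nn-2)/nn" using False by (simp add: alpha_def nn_def)
        have "D*(2*A^2 - 2*nn*A + nn) - nn*A + nn > 0"
        proof (cases "a \<ge> 2")
          case True
          have "nn^2 \<le> nn^a" using True nn2 by (intro power_increasing) auto
          then have A2: "A \<ge> nn^2" by (simp add: A_def)
          have "nn \<le> nn^2" using nn2 by (simp add: power2_eq_square)
          then have Ann: "A \<ge> nn" using A2 by linarith
          have q0: "2*A*(A - nn) \<ge> 0" using Ann Apos by simp
          have q: "2*A^2 - 2*nn*A + nn \<ge> 0" using q0 nn2 by (simp add: power2_eq_square algebra_simps)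
          have "(2*A^2 - 2*nn*A + nn) \<le> D * (2*A^2 - 2*nn*A + nn)"
            using mult_right_mono[OF D1 q] by simp
          moreover have "2*A - 3*nn \<ge> 0"
          proof -
            have "2*nn \<le> nn*nn" using nn2 by (intro mult_right_mono) auto
            then have "nn^2 \<ge> 2*nn" by (simp add: power2_eq_square)
            then show ?thesis using A2 nn2 by linarith
          qed
          then have "A * (2*A - 3*nn) \<ge> 0" using Apos by simp
          then have "2*A^2 - 3*nn*A \<ge> 0" by (simp add: power2_eq_square algebra_simps)
          ultimately show ?thesis using nn2 by linarith
        next
          case False
          then have a1: "a = 1" using a0 by simp
          then have b2: "b \<ge> 2" using G ab by auto
          have "nn^1 \<le> nn^(b-a)" using b2 a1 nn2 by (intro power_increasing) auto
          then have Dn: "D \<ge> nn" by (simp add: D_def)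
          have A: "A = nn" using a1 by (simp add: A_def)
          have "D*(2*A^2 - 2*nn*A + nn) - nn*A + nn = D*nn - nn*nn + nn"
            unfolding A by (simp add: power2_eq_square algebra_simps)
          moreover have "D*nn \<ge> nn*nn" using Dn nn2 by (simp add: mult_right_mono)
          ultimately show ?thesis using nn2 by linarith
        qed
        then show "alpha n * (A*(A*D)*(A*D*C')) < A*(A*D - D)*(A*D*C' - D*C' - C')"
          unfolding al using nn2 Apos Dpos Cpos by (intro arith3) auto
      next
        case True
        then have nn2': "nn = 2" by (simp add: nn_def)
        have al: "alpha n = 1/6" using True by (simp add: alpha_def)
        have "D*(5*A^2 - 12*A + 6) - 6*A + 6 > 0"
        proof (cases "a \<ge> 2")
          case True
          have "nn^2 \<le> nn^a" using True nn2 by (intro power_increasing) auto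
          then have A4: "A \<ge> 4" by (simp add: A_def nn2')
          have "A * (5*A - 12) \<ge> 0" using A4 by simp
          then have q: "5*A^2 - 12*A + 6 \<ge> 0" by (simp add: power2_eq_square algebra_simps)
          have "(5*A^2 - 12*A + 6) \<le> D * (5*A^2 - 12*A + 6)"
            using mult_right_mono[OF D1 q] by simp
          moreover have "A * (5*A - 18) \<ge> 0" using A4 by simp
          then have "5*A^2 - 18*A \<ge> 0" by (simp add: power2_eq_square algebra_simps)
          ultimately show ?thesis by linarith
        next
          case False
          then have a1: "a = 1" using a0 by simp
          then have b3: "b \<ge> 3" using G ab \<open>n = 2\<close> by auto
          have "nn^2 \<le> nn^(b-a)" using b3 a1 nn2 by (intro power_increasing) auto
          then have D4: "D \<ge> 4" by (simp add: D_def nn2')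
          have A: "A = 2" using a1 by (simp add: A_def nn2')
          show ?thesis unfolding A using D4 by simp
        qed
        then show "alpha n * (A*(A*D)*(A*D*C')) < A*(A*D - D)*(A*D*C' - D*C' - C')"
          unfolding al using Apos Dpos Cpos by (intro arith2) auto
      qed
    qed
  next
    case E
    have c0: "c > 0" using ab bc a0 by simp
    have nc: "x \<noteq> y \<and> z \<noteq> concat (replicate c x) \<and> z \<noteq> concat (replicate c y)"
      if code: "is_code [x,y,z]" for x y z
    proof (intro conjI notI)
      assume "x = y"
      then have "[1::nat] = [0]" using noncode[OF code, of 0 "[1]"] by simp
      then show False by simp
    next
      assume h: "z = concat (replicate c x)"
      have "replicate c (0::nat) = [2]" using noncode[OF code, of 2 "replicate c 0"] c0 h by simp
      then show False by (cases c) auto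
    next
      assume h: "z = concat (replicate c y)"
      have "replicate c (1::nat) = [2]" using noncode[OF code, of 2 "replicate c 1"] c0 h by simp
      then show False by (cases c) auto
    qed
    define S where "S = (SIGMA x:W n 1. SIGMA y: W n 1 - {x}.
       W n c - {concat (replicate c x), concat (replicate c y)})"
    have finS: "finite S" by (simp add: S_def)
    have sub: "UD n [a,b,c] \<subseteq> trip ` S"
    proof (rule UDsub)
      fix x y z assume "[x,y,z] \<in> UD n [a,b,c]"
      then have "x \<in> W n a \<and> y \<in> W n b \<and> z \<in> W n c \<and> is_code [x,y,z]" by (rule UD3[THEN iffD1])
      then show "(x,y,z) \<in> S" using nc[of x y z] E by (auto simp: S_def)
    qed
    have cS0: "real (card S) = real (card (W n 1)) * (nn - 1) * (nn^c - 2)"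
      unfolding S_def
    proof (rule card_Sigma3)
      show "real (card (W n 1 - {x})) = nn - 1" if "x \<in> W n 1" for x
        using that n2 by (simp add: card_Diff_singleton card_W nn_def of_nat_diff)
      show "real (card (W n c - {concat (replicate c x), concat (replicate c y)})) = nn^c - 2"
        if x: "x \<in> W n 1" and y: "y \<in> W n 1 - {x}" for x y
      proof -
        have px: "concat (replicate c x) \<in> W n c" and py: "concat (replicate c y) \<in> W n c"
          using rep_W x y by auto
        have lxy: "length x = length y" using x y by (simp add: W_def)
        have neq: "concat (replicate c x) \<noteq> concat (replicate c y)"
          using rep_inj[OF c0 lxy] y by auto
        let ?P = "{concat (replicate c x), concat (replicate c y)}"
        have sub: "?P \<subseteq> W n c" using px py by auto
        have c2: "card ?P = 2" using neq by simp
        have "card (W n c - ?P) = card (W n c) - card ?P" by (rule card_Diff_subset) (use sub in auto)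
        moreover have "card ?P \<le> card (W n c)" by (rule card_mono[OF _ sub]) simp
        ultimately show ?thesis using c2 by (simp add: card_W nn_def of_nat_diff)
      qed
    qed auto
    then have cS: "real (card S) = nn * (nn - 1) * (nn^c - 2)" by (simp add: card_W nn_def)
    define K where "K = nn^(c-1)"
    have eK: "nn^c = nn*K"
    proof -
      have "c = Suc (c-1)" using c0 by simp
      then show ?thesis unfolding K_def by (metis power_Suc)
    qed
    have cSP: "real (card SP) = nn*(nn-1)*(nn*K - K - K)"
      unfolding cardSP E eK K_def by simp
    have al: "alpha n = (nn-2)/nn" using E by (simp add: alpha_def nn_def)
    have n3: "nn \<ge> 3" using E by (simp add: nn_def)
    show ?thesis
    proof (rule key[OF cardle[OF sub finS]])
      have e1: "(nn-2)/nn * (nn*(nn-1)*(nn*K-2)) = (nn-2)*(nn-1)*(nn*K-2)" using nn2 by (simp add: field_simps)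
      have e2: "nn*(nn-1)*(nn*K-K-K) - (nn-2)*(nn-1)*(nn*K-2) = 2*(nn-1)*(nn-2)" by (simp add: algebra_simps)
      have "2*(nn-1)*(nn-2) > 0" using n3 by simp
      then show "alpha n * real (card S) < real (card SP)"
        unfolding al cS cSP eK using e1 e2 by linarith
    qed
  next
    case C
    have c2: "c \<ge> 2" using bc C by simp
    have c0: "c > 0" using c2 by simp
    have nc: "y \<noteq> x @ x \<and> z \<noteq> concat (replicate c x)"
      if code: "is_code [x,y,z]" for x y z
    proof (intro conjI notI)
      assume "y = x @ x"
      then have "[0::nat,0] = [1]" using noncode[OF code, of 1 "[0,0]"] by simp
      then show False by simp
    next
      assume h: "z = concat (replicate c x)"
      have "replicate c (0::nat) = [2]" using noncode[OF code, of 2 "replicate c 0"] c0 h by simp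
      then show False by (cases c) auto
    qed
    define S where "S = (SIGMA x:W n 1. SIGMA y: W n 2 - {x @ x}.
       W n c - {concat (replicate c x)})"
    have finS: "finite S" by (simp add: S_def)
    have sub: "UD n [a,b,c] \<subseteq> trip ` S"
    proof (rule UDsub)
      fix x y z assume "[x,y,z] \<in> UD n [a,b,c]"
      then have "x \<in> W n a \<and> y \<in> W n b \<and> z \<in> W n c \<and> is_code [x,y,z]" by (rule UD3[THEN iffD1])
      then show "(x,y,z) \<in> S" using nc[of x y z] C by (auto simp: S_def)
    qed
    have cS0: "real (card S) = real (card (W n 1)) * (nn^2 - 1) * (nn^c - 1)"
      unfolding S_def
    proof (rule card_Sigma3)
      show "real (card (W n 2 - {x @ x})) = nn^2 - 1" if "x \<in> W n 1" for x
      proof -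
        have "x @ x \<in> W n 2" using that by (auto simp: W_def)
        moreover have "n^2 \<ge> 1" using n2 by simp
        ultimately show ?thesis by (simp add: card_Diff_singleton card_W nn_def of_nat_diff)
      qed
      show "real (card (W n c - {concat (replicate c x)})) = nn^c - 1"
        if x: "x \<in> W n 1" for x
      proof -
        have "concat (replicate c x) \<in> W n c" using rep_W x by auto
        moreover have "n^c \<ge> 1" using n2 by simp
        ultimately show ?thesis by (simp add: card_Diff_singleton card_W nn_def of_nat_diff)
      qed
    qed auto
    then have cS: "real (card S) = nn * (nn^2 - 1) * (nn^c - 1)" by (simp add: card_W nn_def)
    define K where "K = nn^(c-2)"
    have eK: "nn^c = nn*nn*K" and eK1: "nn^(c-1) = nn*K"
    proof -
      have "c = Suc (Suc (c-2))" using c2 by simp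
      then show "nn^c = nn*nn*K" unfolding K_def by (metis power_Suc mult.assoc)
      have "c - 1 = Suc (c-2)" using c2 by simp
      then show "nn^(c-1) = nn*K" unfolding K_def by (metis power_Suc)
    qed
    have nn2': "nn = 2" using C by (simp add: nn_def)
    have "real (card SP) = nn^1*(nn^2 - nn^(2-1))*(nn*nn*K - nn*K - K)"
      using cardSP C by (simp only: eK eK1 K_def[symmetric])
    then have cSP: "real (card SP) = 4*K" unfolding nn2' by simp
    have al: "alpha n = 1/6" using C by (simp add: alpha_def)
    show ?thesis
    proof (rule key[OF cardle[OF sub finS]])
      show "alpha n * real (card S) < real (card SP)"
      proof -
        have e4: "(2::real)^c = 4*K" using eK nn2' by simp
        show ?thesis unfolding al cS cSP nn2' using e4 by simp
      qed
    qed
  next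
    case D
    have c0: "c > 0" using ab bc a0 by simp
    obtain C where C: "C \<in> UD n [a,b,c]" using ne by blast
    obtain x y z where Cx: "C = [x,y,z]" using UDform[OF C] by blast
    have hx: "x \<in> W n 1" and hy: "y \<in> W n 1" and hz: "z \<in> W n c" and code: "is_code [x,y,z]"
      using C D unfolding Cx UD3 by auto
    obtain p where p: "p < 2" "x = [p]" using W1[of x n] hx D by auto
    obtain q where q: "q < 2" "y = [q]" using W1[of y n] hy D by auto
    have "x \<noteq> y"
    proof
      assume "x = y"
      then have "[1::nat] = [0]" using noncode[OF code, of 0 "[1]"] by simp
      then show False by simp
    qed
    then have pq: "p \<noteq> q" using p q by auto
    define js where "js = map (\<lambda>l. if l = p then 0 else (1::nat)) z"
    have zs: "set z \<subseteq> {..<2}" using hz D by (simp add: W_def)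
    have "map (\<lambda>j. [x,y,z] ! j) js = map (\<lambda>l. [l]) z"
    proof -
      have "\<And>l. l \<in> set z \<Longrightarrow> [x,y,z] ! (if l = p then 0 else 1) = [l]"
      proof -
        fix l assume "l \<in> set z"
        then have "l < 2" using zs by auto
        then show "[x,y,z] ! (if l = p then 0 else 1) = [l]" using p q pq by auto
      qed
      then show ?thesis unfolding js_def by simp
    qed
    then have zc: "z = concat (map (\<lambda>j. [x,y,z] ! j) js)" by (simp add: concat_singletons)
    have jsne: "js \<noteq> []" using hz c0 by (auto simp: js_def W_def)
    have jss: "set js \<subseteq> {..<length [x,y,z]}" by (auto simp: js_def)
    have "js = [2]" using noncode[OF code, of 2 js] jsne jss zc by simp
    moreover have "2 \<notin> set js" by (auto simp: js_def)
    ultimately show ?thesis by simp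
  qed
qed


theorem theorem4:
  fixes n a b c :: nat
  assumes "n \<ge> 2" and "a > 0" and "b > 0" and "c > 0"
    and "UD n [a, b, c] \<noteq> {}"
  shows "rho n [a, b, c] > alpha n"
proof -
  have M: "Q n [x,y,z]" if "x \<le> y" "y \<le> z" "0 < x" for x y z
    using main[OF that assms(1)] unfolding Q_def by blast
  have "Q n [a,b,c]"
  proof -
    consider "a \<le> b" "b \<le> c" | "b \<le> a" "a \<le> c" | "a \<le> c" "c \<le> b" | "c \<le> a" "a \<le> b"
      | "b \<le> c" "c \<le> a" | "c \<le> b" "b \<le> a" by linarith
    then show ?thesis
    proof cases
      case 1 then show ?thesis using M assms by blast
    next
      case 2 then show ?thesis using M[of b a c] assms Q01[of n a b c] by blast
    next
      case 3 then show ?thesis using M[of a c b] assms Q12[of n a b c] by blast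
    next
      case 4 then show ?thesis using M[of c a b] assms Q12[of n a b c] Q01[of n a c b] by blast
    next
      case 5 then show ?thesis using M[of b c a] assms Q01[of n a b c] Q12[of n b a c] by blast
    next
      case 6 then show ?thesis
        using M[of c b a] assms Q01[of n a b c] Q12[of n b a c] Q01[of n b c a] by blast
    qed
  qed
  then show ?thesis using assms(5) unfolding Q_def by blast
qed


end
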